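(* Let $\mathcal G$ be a partition of $[n]$ into sets of size $\tau$, and let $S$ be the $\tau$-partition sampling ($\Pr(S=C)=\tau/n$ for $C\in\mathcal G$). Let $\mathbf W=\mathrm{diag}(w_1,\dots,w_n)\succ0$, $\mathbf S=\mathbf I_S$ and $\theta_{\mathbf S}=\frac{1}{c_1p_S}=\frac{n}{\tau}$ (here $c_1=1$). Then the sketch residual satisfies $$\rho\le\frac n\tau\max_{C\in\mathcal G}\sum_{i\in C}w_i.$$
   Context: $\mathbf I_S$ is the column submatrix of the $n\times n$ identity with columns indexed by $S$; $e$ is the all-ones vector; $\Pi_{\mathbf S}=\mathbf S(\mathbf S^\top\mathbf W\mathbf S)^\dagger\mathbf S^\top\mathbf W$; the sketch residual is $\rho=\lambda_{\max}\big(\mathbf W^{1/2}(\mathbb{E}[\theta_{\mathbf S}^2\Pi_{\mathbf S}ee^\top\Pi_{\mathbf S}^\top]-ee^\top)\mathbf W^{1/2}\big)$. *)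

theory Defs
  imports "Jordan_Normal_Form.Char_Poly"
begin

text \<open>Real matrices are Jordan_Normal_Form matrices; indices of [n] are 0..n-1.\<close>

text \<open>Column submatrix of the n x n identity with columns indexed by S (increasing order).\<close>
definition idcols :: "nat \<Rightarrow> nat set \<Rightarrow> real mat" where
  "idcols n S = mat n (card S) (\<lambda>(i,j). if i = sorted_list_of_set S ! j then 1 else 0)"

text \<open>Moore-Penrose pseudoinverse (real case: conjugate transpose = transpose).\<close>
definition is_pinv :: "real mat \<Rightarrow> real mat \<Rightarrow> bool" where
  "is_pinv A X \<longleftrightarrow> X \<in> carrier_mat (dim_col A) (dim_row A) \<and>
     A * X * A = A \<and> X * A * X = X \<and>
     transpose_mat (A * X) = A * X \<and> transpose_mat (X * A) = X * A"

definition pinv :: "real mat \<Rightarrow> real mat" where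
  "pinv A = (THE X. is_pinv A X)"

definition psd :: "real mat \<Rightarrow> bool" where
  "psd A \<longleftrightarrow> A \<in> carrier_mat (dim_row A) (dim_row A) \<and> transpose_mat A = A \<and>
     (\<forall>v \<in> carrier_vec (dim_row A). v \<bullet> (A *\<^sub>v v) \<ge> 0)"

definition mat_sqrt :: "real mat \<Rightarrow> real mat" where
  "mat_sqrt A = (THE X. psd X \<and> X \<in> carrier_mat (dim_row A) (dim_row A) \<and> X * X = A)"

definition lambda_max :: "real mat \<Rightarrow> real" where
  "lambda_max A = Max {k. eigenvalue A k}"

definition proj_S :: "real mat \<Rightarrow> real mat \<Rightarrow> real mat" where
  "proj_S W S = S * pinv (transpose_mat S * W * S) * transpose_mat S * W"

definition ones_vec :: "nat \<Rightarrow> real vec" where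
  "ones_vec n = vec n (\<lambda>_. 1)"

definition outer :: "real vec \<Rightarrow> real vec \<Rightarrow> real mat" where
  "outer u v = mat (dim_vec u) (dim_vec v) (\<lambda>(i,j). u $ i * v $ j)"

text \<open>Sketch residual for a random sketch S = I_C, C drawn from the finite support Omega
  with probabilities p C, and weights theta C:
  rho = lambda_max (W^(1/2) (E[theta^2 Pi e e^T Pi^T] - e e^T) W^(1/2)).\<close>
definition sketch_residual ::
  "nat \<Rightarrow> real mat \<Rightarrow> nat set set \<Rightarrow> (nat set \<Rightarrow> real) \<Rightarrow> (nat set \<Rightarrow> real) \<Rightarrow> real" where
  "sketch_residual n W \<Omega> p \<theta> =
     (let E = mat n n (\<lambda>(i,j). \<Sum>C\<in>\<Omega>. p C * (\<theta> C)\<^sup>2 *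
                 (outer (proj_S W (idcols n C) *\<^sub>v ones_vec n) (proj_S W (idcols n C) *\<^sub>v ones_vec n)) $$ (i,j));
          Wh = mat_sqrt W
      in lambda_max (Wh * (E - outer (ones_vec n) (ones_vec n)) * Wh))"

end

theory Submission
  imports Defs
begin


definition dg :: "nat \<Rightarrow> (nat \<Rightarrow> real) \<Rightarrow> real mat" where
  "dg n f = mat n n (\<lambda>(i,j). if i = j then f i else 0)"

lemma dg_carrier[simp]: "dg n f \<in> carrier_mat n n"
  by (simp add: dg_def)

lemma dg_index[simp]: "i < n \<Longrightarrow> j < n \<Longrightarrow> dg n f $$ (i,j) = (if i = j then f i else 0)"
  by (simp add: dg_def)

lemma dg_dims[simp]: "dim_row (dg n f) = n" "dim_col (dg n f) = n"
  by (simp_all add: dg_def)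

lemma if0_mult[simp]: "(if P then (a::real) else 0) * x = (if P then a * x else 0)" by simp
lemma mult_if0[simp]: "x * (if P then (a::real) else 0) = (if P then x * a else 0)" by simp

lemma prod_entry:
  assumes "A \<in> carrier_mat n m" "B \<in> carrier_mat m p" "i < n" "k < p"
  shows "(A * B) $$ (i,k) = (\<Sum>j\<in>{0..<m}. A $$ (i,j) * B $$ (j,k))"
  using assms by (simp add: scalar_prod_def)

lemma dg_mult_left:
  assumes "X \<in> carrier_mat t m"
  shows "dg t a * X = mat t m (\<lambda>(i,k). a i * X $$ (i,k))"
proof (rule eq_matI)
  fix i k assume ik: "i < dim_row (mat t m (\<lambda>(i,k). a i * X $$ (i,k)))" "k < dim_col (mat t m (\<lambda>(i,k). a i * X $$ (i,k)))"
  hence "i < t" "k < m" by auto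
  hence "(dg t a * X) $$ (i,k) = (\<Sum>j\<in>{0..<t}. (if i = j then a i else 0) * X $$ (j,k))"
    using assms by (subst prod_entry[of _ t t _ m], auto intro!: sum.cong)
  also have "\<dots> = a i * X $$ (i,k)" using \<open>i < t\<close>
    by simp
  finally show "(dg t a * X) $$ (i,k) = mat t m (\<lambda>(i,k). a i * X $$ (i,k)) $$ (i,k)"
    using \<open>i < t\<close> \<open>k < m\<close> by simp
qed (use assms in auto)

lemma dg_mult_right:
  assumes "X \<in> carrier_mat m t"
  shows "X * dg t a = mat m t (\<lambda>(i,k). X $$ (i,k) * a k)"
proof (rule eq_matI)
  fix i k assume ik: "i < dim_row (mat m t (\<lambda>(i,k). X $$ (i,k) * a k))" "k < dim_col (mat m t (\<lambda>(i,k). X $$ (i,k) * a k))"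
  hence "i < m" "k < t" by auto
  hence "(X * dg t a) $$ (i,k) = (\<Sum>j\<in>{0..<t}. X $$ (i,j) * (if j = k then a j else 0))"
    using assms by (subst prod_entry[of _ m t _ t], auto intro!: sum.cong)
  also have "\<dots> = X $$ (i,k) * a k" using \<open>k < t\<close>
    by simp
  finally show "(X * dg t a) $$ (i,k) = mat m t (\<lambda>(i,k). X $$ (i,k) * a k) $$ (i,k)"
    using \<open>i < m\<close> \<open>k < t\<close> by simp
qed (use assms in auto)

lemma dg_mult_dg: "dg t a * dg t b = dg t (\<lambda>i. a i * b i)"
  by (subst dg_mult_left[of _ t t]) (auto simp: dg_def intro!: eq_matI)

lemma dg_transpose[simp]: "transpose_mat (dg t a) = dg t a"
  by (auto simp: dg_def intro!: eq_matI)

lemma dg_cong: "(\<And>j. j < t \<Longrightarrow> f j = g j) \<Longrightarrow> dg t f = dg t g"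
  by (auto simp: dg_def intro!: eq_matI)

lemma sum_nth_set: "distinct s \<Longrightarrow> (\<Sum>k\<in>{0..<length s}. f (s!k)) = (\<Sum>x\<in>set s. f x)"
  by (simp add: sum.distinct_set_conv_list sum_list_sum_nth)

lemma idcols_carrier[simp]: "idcols n C \<in> carrier_mat n (card C)"
  by (simp add: idcols_def)

lemma idcols_index: "i < n \<Longrightarrow> j < card C \<Longrightarrow> idcols n C $$ (i,j) = (if i = sorted_list_of_set C ! j then 1 else 0)"
  by (simp add: idcols_def)

lemma proj_idcols:
  assumes C: "C \<subseteq> {0..<n}" and w: "\<forall>i<n. 0 < w i"
  shows "proj_S (dg n w) (idcols n C) = dg n (\<lambda>i. if i \<in> C then 1 else 0)"
proof -
  define s where "s = sorted_list_of_set C"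
  define t where "t = card C"
  have finC: "finite C" using C finite_subset by blast
  have ls: "length s = t" and ds: "distinct s" and ss: "set s = C"
    using finC by (auto simp: s_def t_def)
  have sn: "\<And>k. k < t \<Longrightarrow> s ! k < n" using ls ss C nth_mem by fastforce
  have wsk: "\<And>k. k < t \<Longrightarrow> 0 < w (s ! k)" using sn w by auto
  define I where "I = idcols n C"
  have I: "I \<in> carrier_mat n t" unfolding I_def t_def by simp
  have Ii: "\<And>i k. i < n \<Longrightarrow> k < t \<Longrightarrow> I $$ (i,k) = (if i = s ! k then 1 else 0)"
    unfolding I_def s_def t_def by (rule idcols_index)
  have A: "transpose_mat I * dg n w * I = dg t (\<lambda>j. w (s!j))"
  proof -
    have "transpose_mat I * dg n w = mat t n (\<lambda>(j,i). transpose_mat I $$ (j,i) * w i)"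
      using I by (intro dg_mult_right) auto
    also have "\<dots> * I = dg t (\<lambda>j. w (s!j))"
    proof (rule eq_matI)
      fix j k assume "j < dim_row (dg t (\<lambda>j. w (s!j)))" "k < dim_col (dg t (\<lambda>j. w (s!j)))"
      hence jk: "j < t" "k < t" by auto
      have "(mat t n (\<lambda>(j,i). transpose_mat I $$ (j,i) * w i) * I) $$ (j,k)
          = (\<Sum>i\<in>{0..<n}. (if i = s!j then 1 else 0) * w i * (if i = s!k then 1 else 0))"
        using jk I by (subst prod_entry[of _ t n _ t]) (auto simp: Ii intro!: sum.cong)
      also have "\<dots> = (if s!j = s!k then w (s!j) else 0)"
        using sn[OF jk(1)] by (simp add: sum.delta')
      also have "\<dots> = dg t (\<lambda>j. w (s!j)) $$ (j,k)"
        using jk ds ls by (simp add: nth_eq_iff_index_eq)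
      finally show "(mat t n (\<lambda>(j,i). transpose_mat I $$ (j,i) * w i) * I) $$ (j,k) = dg t (\<lambda>j. w (s!j)) $$ (j,k)" .
    qed (use I in auto)
    finally show ?thesis .
  qed
  define Y where "Y = dg t (\<lambda>j. 1 / w (s!j))"
  have P: "pinv (dg t (\<lambda>j. w (s!j))) = Y"
    unfolding pinv_def
  proof (rule the_equality)
    show "is_pinv (dg t (\<lambda>j. w (s!j))) Y"
      unfolding is_pinv_def Y_def using wsk
      by (simp add: dg_mult_dg, intro conjI dg_cong) simp_all
  next
    fix X assume X: "is_pinv (dg t (\<lambda>j. w (s!j))) X"
    hence Xc: "X \<in> carrier_mat t t" and eq: "dg t (\<lambda>j. w (s!j)) * X * dg t (\<lambda>j. w (s!j)) = dg t (\<lambda>j. w (s!j))"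
      unfolding is_pinv_def by auto
    have "dg t (\<lambda>j. w (s!j)) * X * dg t (\<lambda>j. w (s!j)) = mat t t (\<lambda>(i,k). w (s!i) * X $$ (i,k) * w (s!k))"
      using Xc by (simp add: dg_mult_left[OF Xc], subst dg_mult_right[of _ t t]) (auto intro!: eq_matI)
    with eq have e: "\<And>i k. i < t \<Longrightarrow> k < t \<Longrightarrow> w (s!i) * X $$ (i,k) * w (s!k) = (if i = k then w (s!i) else 0)"
      by (metis (no_types, lifting) case_prod_conv dg_index index_mat(1))
    show "X = Y"
    proof (rule eq_matI)
      fix i k assume "i < dim_row Y" "k < dim_col Y"
      hence ik: "i < t" "k < t" by (auto simp: Y_def)
      show "X $$ (i,k) = Y $$ (i,k)"
        using e[OF ik] wsk[OF ik(1)] wsk[OF ik(2)] ik unfolding Y_def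
        by (cases "i = k") (auto simp: field_simps)
    qed (use Xc in \<open>auto simp: Y_def\<close>)
  qed
  have "proj_S (dg n w) (idcols n C) = I * Y * transpose_mat I * dg n w"
    unfolding proj_S_def I_def[symmetric] A P ..
  also have "I * Y = mat n t (\<lambda>(i,k). I $$ (i,k) * (1 / w (s!k)))"
    unfolding Y_def using I by (rule dg_mult_right)
  also have "mat n t (\<lambda>(i,k). I $$ (i,k) * (1 / w (s!k))) * transpose_mat I * dg n w = dg n (\<lambda>i. if i \<in> C then 1 else 0)"
  proof -
    have "mat n t (\<lambda>(i,k). I $$ (i,k) * (1 / w (s!k))) * transpose_mat I \<in> carrier_mat n n" using I by auto
    hence "mat n t (\<lambda>(i,k). I $$ (i,k) * (1 / w (s!k))) * transpose_mat I * dg n w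
      = mat n n (\<lambda>(i,l). (mat n t (\<lambda>(i,k). I $$ (i,k) * (1 / w (s!k))) * transpose_mat I) $$ (i,l) * w l)"
      by (rule dg_mult_right)
    also have "\<dots> = dg n (\<lambda>i. if i \<in> C then 1 else 0)"
    proof (rule eq_matI)
      fix i l assume "i < dim_row (dg n (\<lambda>i. if i \<in> C then 1 else 0))" "l < dim_col (dg n (\<lambda>i. if i \<in> C then 1 else 0))"
      hence il: "i < n" "l < n" by auto
      have "(mat n t (\<lambda>(i,k). I $$ (i,k) * (1 / w (s!k))) * transpose_mat I) $$ (i,l)
         = (\<Sum>k\<in>{0..<t}. (if i = s!k then 1 else 0) * (1 / w (s!k)) * (if l = s!k then 1 else 0))"
        using il I by (subst prod_entry[of _ n t _ n]) (auto simp: Ii intro!: sum.cong)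
      also have "\<dots> = (\<Sum>x\<in>C. (if i = x then 1 else 0) * (1 / w x) * (if l = x then 1 else 0))"
        using sum_nth_set[OF ds, of "\<lambda>x. (if i = x then 1 else 0) * (1 / w x) * (if l = x then 1 else 0)"] ls ss
        by simp
      also have "\<dots> = (if i = l \<and> i \<in> C then 1 / w i else 0)"
        using finC by (auto simp add: sum.delta)
      finally show "mat n n (\<lambda>(i,l). (mat n t (\<lambda>(i,k). I $$ (i,k) * (1 / w (s!k))) * transpose_mat I) $$ (i,l) * w l) $$ (i,l)
          = dg n (\<lambda>i. if i \<in> C then 1 else 0) $$ (i,l)"
        using il w by auto
    qed auto
    finally show ?thesis .
  qed
  finally show ?thesis .
qed



lemma quad_form:
  assumes "X \<in> carrier_mat n n" "v \<in> carrier_vec n"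
  shows "v \<bullet> (X *\<^sub>v v) = (\<Sum>i\<in>{0..<n}. v $ i * (\<Sum>j\<in>{0..<n}. X $$ (i,j) * v $ j))"
  using assms by (simp add: scalar_prod_def)

lemma sum_dg_left: "i < n \<Longrightarrow> (\<Sum>j\<in>{0..<n}. dg n f $$ (i,j) * g j) = f i * g i"
proof -
  assume i: "i < n"
  have "(\<Sum>j\<in>{0..<n}. dg n f $$ (i,j) * g j) = (\<Sum>j\<in>{0..<n}. if i = j then f i * g j else 0)"
    using i by (intro sum.cong) auto
  also have "\<dots> = f i * g i" using i by simp
  finally show ?thesis .
qed

lemma sum_dg_right: "k < n \<Longrightarrow> (\<Sum>j\<in>{0..<n}. g j * dg n f $$ (j,k)) = g k * f k"
proof -
  assume k: "k < n"
  have "(\<Sum>j\<in>{0..<n}. g j * dg n f $$ (j,k)) = (\<Sum>j\<in>{0..<n}. if j = k then g j * f k else 0)"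
    using k by (intro sum.cong) auto
  also have "\<dots> = g k * f k" using k by simp
  finally show ?thesis .
qed

lemma dg_psd: assumes "\<forall>i<n. 0 \<le> f i" shows "psd (dg n f)"
  unfolding psd_def
proof (intro conjI ballI)
  fix v :: "real vec" assume v: "v \<in> carrier_vec (dim_row (dg n f))"
  hence v': "v \<in> carrier_vec n" by simp
  have "v \<bullet> (dg n f *\<^sub>v v) = (\<Sum>i\<in>{0..<n}. v $ i * (\<Sum>j\<in>{0..<n}. (if i = j then f i else 0) * v $ j))"
    using quad_form[OF dg_carrier v'] by (auto intro!: sum.cong)
  also have "\<dots> = (\<Sum>i\<in>{0..<n}. f i * (v $ i)^2)"
    by (rule sum.cong) (auto simp: power2_eq_square)
  also have "\<dots> \<ge> 0" using assms by (intro sum_nonneg) auto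
  finally show "v \<bullet> (dg n f *\<^sub>v v) \<ge> 0" .
qed auto

lemma sqrt_dg:
  assumes w: "\<forall>i<n. 0 < w i"
  shows "mat_sqrt (dg n w) = dg n (\<lambda>i. sqrt (w i))"
  unfolding mat_sqrt_def dg_dims
proof (rule the_equality)
  show "psd (dg n (\<lambda>i. sqrt (w i))) \<and> dg n (\<lambda>i. sqrt (w i)) \<in> carrier_mat n n \<and>
    dg n (\<lambda>i. sqrt (w i)) * dg n (\<lambda>i. sqrt (w i)) = dg n w"
    using w by (auto simp: dg_psd dg_mult_dg less_imp_le intro!: dg_cong)
next
  fix X assume "psd X \<and> X \<in> carrier_mat n n \<and> X * X = dg n w"
  hence psdX: "psd X" and X: "X \<in> carrier_mat n n" and XX: "X * X = dg n w" by auto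
  define S where "S = dg n (\<lambda>i. sqrt (w i))"
  have "X * (X * X) = (X * X) * X" using X by (simp add: assoc_mult_mat[of _ n n _ n _ n])
  hence "X * dg n w = dg n w * X" unfolding XX .
  hence "mat n n (\<lambda>(i,k). X $$ (i,k) * w k) = mat n n (\<lambda>(i,k). w i * X $$ (i,k))"
    using dg_mult_right[OF X] dg_mult_left[OF X] by simp
  hence comm: "\<And>i k. i < n \<Longrightarrow> k < n \<Longrightarrow> X $$ (i,k) * w k = w i * X $$ (i,k)"
    by (metis (no_types, lifting) case_prod_conv index_mat(1))
  have comm2: "X $$ (i,k) * sqrt (w k) = sqrt (w i) * X $$ (i,k)" if ik: "i < n" "k < n" for i k
  proof (cases "X $$ (i,k) = 0")
    case False
    with comm[OF ik] have "w k = w i" by simp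
    thus ?thesis by simp
  qed simp
  have P: "(\<Sum>j\<in>{0..<n}. (X $$ (i,j) + S $$ (i,j)) * (X $$ (j,k) - S $$ (j,k))) = 0"
    if ik: "i < n" "k < n" for i k
  proof -
    have XXe: "(\<Sum>j\<in>{0..<n}. X $$ (i,j) * X $$ (j,k)) = (if i = k then w i else 0)"
      using prod_entry[OF X X ik] XX ik by simp
    have "(\<Sum>j\<in>{0..<n}. (X $$ (i,j) + S $$ (i,j)) * (X $$ (j,k) - S $$ (j,k)))
      = (\<Sum>j\<in>{0..<n}. X $$ (i,j) * X $$ (j,k)) - (\<Sum>j\<in>{0..<n}. X $$ (i,j) * S $$ (j,k))
        + (\<Sum>j\<in>{0..<n}. S $$ (i,j) * X $$ (j,k)) - (\<Sum>j\<in>{0..<n}. S $$ (i,j) * S $$ (j,k))"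
      by (simp add: algebra_simps sum.distrib sum_subtractf)
    also have "\<dots> = (if i = k then w i else 0) - X $$ (i,k) * sqrt (w k) + sqrt (w i) * X $$ (i,k)
        - (if i = k then sqrt (w i) * sqrt (w i) else 0)"
      unfolding XXe S_def using ik by (simp add: sum_dg_left sum_dg_right)
    also have "\<dots> = 0" using comm2[OF ik] w ik by (auto simp add: less_imp_le)
    finally show ?thesis .
  qed
  show "X = S"
  proof (rule eq_matI)
    fix i k assume "i < dim_row S" "k < dim_col S"
    hence ik: "i < n" "k < n" by (auto simp: S_def)
    define z where "z = vec n (\<lambda>j. X $$ (j,k) - S $$ (j,k))"
    have z: "z \<in> carrier_vec n" by (simp add: z_def)
    have "z \<bullet> (X *\<^sub>v z) \<ge> 0" using psdX X z unfolding psd_def by auto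
    have "0 = (\<Sum>i\<in>{0..<n}. z $ i * (\<Sum>j\<in>{0..<n}. (X $$ (i,j) + S $$ (i,j)) * z $ j))"
      using P ik by (simp add: z_def)
    also have "\<dots> = (\<Sum>i\<in>{0..<n}. z $ i * (\<Sum>j\<in>{0..<n}. X $$ (i,j) * z $ j))
        + (\<Sum>i\<in>{0..<n}. z $ i * (\<Sum>j\<in>{0..<n}. S $$ (i,j) * z $ j))"
      by (simp add: distrib_right distrib_left sum.distrib)
    also have "(\<Sum>i\<in>{0..<n}. z $ i * (\<Sum>j\<in>{0..<n}. S $$ (i,j) * z $ j))
        = (\<Sum>i\<in>{0..<n}. sqrt (w i) * (z $ i)^2)"
      unfolding S_def by (intro sum.cong refl, subst sum_dg_left) (auto simp: power2_eq_square)
    also have "(\<Sum>i\<in>{0..<n}. z $ i * (\<Sum>j\<in>{0..<n}. X $$ (i,j) * z $ j)) = z \<bullet> (X *\<^sub>v z)"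
      unfolding quad_form[OF X z] ..
    finally have "(\<Sum>i\<in>{0..<n}. sqrt (w i) * (z $ i)^2) \<le> 0" using \<open>z \<bullet> (X *\<^sub>v z) \<ge> 0\<close> by linarith
    moreover have "\<forall>j\<in>{0..<n}. 0 \<le> sqrt (w j) * (z $ j)^2" using w by auto
    ultimately have "\<forall>j\<in>{0..<n}. sqrt (w j) * (z $ j)^2 = 0"
      using sum_nonneg_eq_0_iff[of "{0..<n}" "\<lambda>j. sqrt (w j) * (z $ j)^2"]
      by (meson finite_atLeastLessThan order_antisym sum_nonneg)
    hence "sqrt (w i) * (z $ i)^2 = 0" "0 < w i" using ik w by auto
    hence "z $ i = 0" by simp
    thus "X $$ (i,k) = S $$ (i,k)" using ik by (simp add: z_def)
  qed (use X in \<open>auto simp: S_def\<close>)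
qed



lemma cs_ineq:
  fixes a b :: "nat \<Rightarrow> real"
  shows "(\<Sum>i\<in>I. a i * b i)^2 \<le> (\<Sum>i\<in>I. (a i)^2) * (\<Sum>i\<in>I. (b i)^2)"
proof -
  have pt: "(a i * b j - a j * b i)^2 = ((a i)^2 * (b j)^2 + (b i)^2 * (a j)^2) - 2 * ((a i * b i) * (a j * b j))" for i j
    by (simp add: power2_eq_square algebra_simps)
  have "0 \<le> (\<Sum>i\<in>I. \<Sum>j\<in>I. (a i * b j - a j * b i)^2)" by (intro sum_nonneg) auto
  also have "\<dots> = (\<Sum>i\<in>I. \<Sum>j\<in>I. ((a i)^2 * (b j)^2 + (b i)^2 * (a j)^2) - 2 * ((a i * b i) * (a j * b j)))"
    by (simp only: pt)
  also have "\<dots> = (\<Sum>i\<in>I. \<Sum>j\<in>I. (a i)^2 * (b j)^2) + (\<Sum>i\<in>I. \<Sum>j\<in>I. (b i)^2 * (a j)^2)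
      - 2 * (\<Sum>i\<in>I. \<Sum>j\<in>I. (a i * b i) * (a j * b j))"
    by (simp only: sum_subtractf sum.distrib sum_distrib_left[symmetric])
  also have "\<dots> = 2 * ((\<Sum>i\<in>I. (a i)^2) * (\<Sum>i\<in>I. (b i)^2) - (\<Sum>i\<in>I. a i * b i)^2)"
    by (simp only: sum_product[symmetric] power2_eq_square) (simp add: algebra_simps)
  finally show ?thesis by simp
qed



lemma K_bound:
  fixes n \<tau> :: nat and G :: "nat set set" and w :: "nat \<Rightarrow> real"
  assumes n_pos: "0 < n"
    and part_cover: "\<Union>G = {0..<n}"
    and part_disj: "\<forall>C\<in>G. \<forall>D\<in>G. C \<noteq> D \<longrightarrow> C \<inter> D = {}"
    and part_size: "\<forall>C\<in>G. card C = \<tau>"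
    and w_pos: "\<forall>i<n. 0 < w i"
    and tau_pos: "0 < \<tau>"
  shows "lambda_max (mat n n (\<lambda>(i,j). sqrt (w i) * (real n / real \<tau> *
            (\<Sum>C\<in>G. (if i \<in> C then 1 else 0) * (if j \<in> C then 1 else 0)) - 1) * sqrt (w j)))
         \<le> real n / real \<tau> * Max ((\<lambda>C. \<Sum>i\<in>C. w i) ` G)"
proof -
  define c where "c = real n / real \<tau>"
  define Mx where "Mx = Max ((\<lambda>C. \<Sum>i\<in>C. w i) ` G)"
  define q where "q = (\<lambda>i j. \<Sum>C\<in>G. (if i \<in> C then 1 else 0) * (if j \<in> C then (1::real) else 0))"
  define K where "K = mat n n (\<lambda>(i,j). sqrt (w i) * (c * q i j - 1) * sqrt (w j))"
  have Kdef: "mat n n (\<lambda>(i,j). sqrt (w i) * (real n / real \<tau> *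
            (\<Sum>C\<in>G. (if i \<in> C then 1 else 0) * (if j \<in> C then 1 else 0)) - 1) * sqrt (w j)) = K"
    unfolding K_def c_def q_def ..
  have Csub: "\<And>C. C \<in> G \<Longrightarrow> C \<subseteq> {0..<n}" using part_cover by blast
  have finG: "finite G"
    by (rule finite_subset[of _ "Pow {0..<n}"]) (use Csub in auto)
  have finC: "\<And>C. C \<in> G \<Longrightarrow> finite C" using Csub finite_subset by blast
  have c_pos: "0 < c" using n_pos tau_pos by (simp add: c_def)
  have Kc: "K \<in> carrier_mat n n" by (simp add: K_def)
  have Kij: "\<And>i j. i < n \<Longrightarrow> j < n \<Longrightarrow> K $$ (i,j) = sqrt (w i) * (c * q i j - 1) * sqrt (w j)"
    by (simp add: K_def)
  have Kv: "\<And>v i. v \<in> carrier_vec n \<Longrightarrow> i < n \<Longrightarrow> (K *\<^sub>v v) $ i = (\<Sum>j\<in>{0..<n}. K $$ (i,j) * v $ j)"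
    using Kc by (auto simp: scalar_prod_def intro!: sum.cong)
  have sum_chi: "(\<Sum>j\<in>{0..<n}. (if j \<in> C then 1 else 0) * f j) = (\<Sum>j\<in>C. f j)" if "C \<in> G" for C and f :: "nat \<Rightarrow> real"
  proof -
    have "(\<Sum>j\<in>{0..<n}. (if j \<in> C then 1 else 0) * f j) = (\<Sum>j\<in>{0..<n}. if j \<in> C then f j else 0)"
      by (intro sum.cong) auto
    also have "\<dots> = (\<Sum>j\<in>{0..<n} \<inter> C. f j)" by (simp add: sum.inter_restrict)
    also have "{0..<n} \<inter> C = C" using Csub[OF that] by blast
    finally show ?thesis .
  qed
  have one_C: "(\<Sum>C\<in>G. (if i \<in> C then 1 else 0)) = (1::real)" if ilt: "i < n" for i
  proof -
    have "i \<in> \<Union>G" using part_cover ilt by auto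
    then obtain C0 where C0: "C0 \<in> G" "i \<in> C0" by auto
    have "(\<Sum>C\<in>G. (if i \<in> C then 1 else 0)) = (\<Sum>C\<in>G. (if C = C0 then 1 else (0::real)))"
      using part_disj C0 by (intro sum.cong) auto
    also have "\<dots> = 1" using finG C0 by simp
    finally show ?thesis .
  qed
  have fin_eig: "finite {k. eigenvalue K k}"
  proof -
    have "char_poly K \<noteq> 0" using degree_monic_char_poly[OF Kc] by auto
    hence "finite {k. poly (char_poly K) k = 0}" by (rule poly_roots_finite)
    thus ?thesis using eigenvalue_root_char_poly[OF Kc] by simp
  qed
  have zero: "eigenvalue K 0"
  proof -
    define y where "y = vec n (\<lambda>i. 1 / sqrt (w i))"
    have "K *\<^sub>v y = 0 \<cdot>\<^sub>v y"
    proof (rule eq_vecI)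
      fix i assume "i < dim_vec (0 \<cdot>\<^sub>v y)"
      hence i: "i < n" by (simp add: y_def)
      have "(K *\<^sub>v y) $ i = (\<Sum>j\<in>{0..<n}. sqrt (w i) * (c * q i j - 1))"
        unfolding Kv[OF _ i, of y, simplified y_def, simplified, folded y_def] using w_pos i by (intro sum.cong) (auto simp: y_def Kij)
      also have "\<dots> = sqrt (w i) * (c * (\<Sum>j\<in>{0..<n}. q i j) - real n)"
        by (simp add: sum_distrib_left[symmetric] sum_subtractf)
      also have "(\<Sum>j\<in>{0..<n}. q i j) = (\<Sum>C\<in>G. (if i \<in> C then 1 else 0) * (\<Sum>j\<in>{0..<n}. (if j \<in> C then 1 else 0) * 1))"
        unfolding q_def by (simp add: sum.swap[of _ "{0..<n}" G] sum_distrib_left)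
      also have "\<dots> = (\<Sum>C\<in>G. (if i \<in> C then 1 else 0) * real \<tau>)"
        by (intro sum.cong refl, subst sum_chi) (auto simp: part_size)
      also have "\<dots> = real \<tau>" by (subst sum_distrib_right[symmetric], simp only: one_C[OF i])
      finally show "(K *\<^sub>v y) $ i = (0 \<cdot>\<^sub>v y) $ i"
        using i tau_pos by (simp add: c_def y_def)
    qed (use Kc in \<open>auto simp: y_def\<close>)
    moreover have "y \<noteq> 0\<^sub>v n"
    proof
      assume "y = 0\<^sub>v n"
      hence "y $ 0 = 0" using n_pos by simp
      moreover have "0 < w 0" using n_pos w_pos by simp
      ultimately show False using n_pos by (simp add: y_def)
    qed
    ultimately show ?thesis unfolding eigenvalue_def eigenvector_def using Kc
      by (intro exI[of _ y]) (auto simp: y_def)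
  qed
  have bound: "k \<le> c * Mx" if "eigenvalue K k" for k
  proof -
    from that obtain v where v: "v \<in> carrier_vec n" "v \<noteq> 0\<^sub>v n" "K *\<^sub>v v = k \<cdot>\<^sub>v v"
      unfolding eigenvalue_def eigenvector_def using Kc by auto
    define u where "u = (\<lambda>i. sqrt (w i) * v $ i)"
    define V where "V = (\<Sum>i\<in>{0..<n}. (v $ i)^2)"
    have vv: "v \<bullet> v = V" using v(1) by (simp add: V_def scalar_prod_def power2_eq_square)
    have Vpos: "0 < V"
    proof -
      obtain i where i: "i < n" "v $ i \<noteq> 0" using v(1,2) by (metis carrier_vecD eq_vecI index_zero_vec(1,2))
      have "(v $ i)^2 \<le> V" unfolding V_def by (rule member_le_sum) (use i in auto)
      moreover have "0 < (v $ i)^2" using i by simp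
      ultimately show ?thesis by linarith
    qed
    have "v \<bullet> (K *\<^sub>v v) = k * V" using v vv by simp
    also have "v \<bullet> (K *\<^sub>v v) = (\<Sum>i\<in>{0..<n}. \<Sum>j\<in>{0..<n}. u i * u j * (c * q i j - 1))"
      unfolding quad_form[OF Kc v(1)] sum_distrib_left
      by (intro sum.cong refl) (auto simp: Kij u_def)
    also have "\<dots> = c * (\<Sum>i\<in>{0..<n}. \<Sum>j\<in>{0..<n}. u i * u j * q i j) - (\<Sum>i\<in>{0..<n}. \<Sum>j\<in>{0..<n}. u i * u j)"
      by (simp add: algebra_simps sum_subtractf sum_distrib_left)
    also have "(\<Sum>i\<in>{0..<n}. \<Sum>j\<in>{0..<n}. u i * u j) = (\<Sum>i\<in>{0..<n}. u i)^2"
      by (simp add: power2_eq_square sum_product)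
    also have "(\<Sum>i\<in>{0..<n}. \<Sum>j\<in>{0..<n}. u i * u j * q i j)
        = (\<Sum>C\<in>G. (\<Sum>i\<in>{0..<n}. (if i \<in> C then 1 else 0) * u i)^2)"
    proof -
      have "(\<Sum>i\<in>{0..<n}. \<Sum>j\<in>{0..<n}. u i * u j * q i j)
          = (\<Sum>i\<in>{0..<n}. \<Sum>j\<in>{0..<n}. \<Sum>C\<in>G. ((if i \<in> C then 1 else 0) * u i) * ((if j \<in> C then 1 else 0) * u j))"
        unfolding q_def sum_distrib_left by (intro sum.cong refl) (simp add: algebra_simps)
      also have "\<dots> = (\<Sum>C\<in>G. \<Sum>i\<in>{0..<n}. \<Sum>j\<in>{0..<n}. ((if i \<in> C then 1 else 0) * u i) * ((if j \<in> C then 1 else 0) * u j))"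
        by (simp add: sum.swap[of _ G])
      also have "\<dots> = (\<Sum>C\<in>G. (\<Sum>i\<in>{0..<n}. (if i \<in> C then 1 else 0) * u i)^2)"
        by (simp add: power2_eq_square sum_product)
      finally show ?thesis .
    qed
    finally have kV: "k * V = c * (\<Sum>C\<in>G. (\<Sum>i\<in>{0..<n}. (if i \<in> C then 1 else 0) * u i)^2) - (\<Sum>i\<in>{0..<n}. u i)^2" by simp
    have "(\<Sum>C\<in>G. (\<Sum>i\<in>{0..<n}. (if i \<in> C then 1 else 0) * u i)^2) \<le> (\<Sum>C\<in>G. Mx * (\<Sum>i\<in>C. (v $ i)^2))"
    proof (rule sum_mono)
      fix C assume C: "C \<in> G"
      have "(\<Sum>i\<in>{0..<n}. (if i \<in> C then 1 else 0) * u i)^2 = (\<Sum>i\<in>C. sqrt (w i) * v $ i)^2"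
        by (simp only: sum_chi[OF C] u_def)
      also have "\<dots> \<le> (\<Sum>i\<in>C. (sqrt (w i))^2) * (\<Sum>i\<in>C. (v $ i)^2)" by (rule cs_ineq)
      also have "(\<Sum>i\<in>C. (sqrt (w i))^2) = (\<Sum>i\<in>C. w i)"
        using Csub[OF C] w_pos by (intro sum.cong) (auto simp: subset_iff less_imp_le)
      also have "(\<Sum>i\<in>C. w i) * (\<Sum>i\<in>C. (v $ i)^2) \<le> Mx * (\<Sum>i\<in>C. (v $ i)^2)"
        unfolding Mx_def using finG C by (intro mult_right_mono Max_ge sum_nonneg) auto
      finally show "(\<Sum>i\<in>{0..<n}. (if i \<in> C then 1 else 0) * u i)^2 \<le> Mx * (\<Sum>i\<in>C. (v $ i)^2)" .
    qed
    also have "(\<Sum>C\<in>G. Mx * (\<Sum>i\<in>C. (v $ i)^2)) = Mx * V"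
    proof -
      have "(\<Sum>i\<in>\<Union>G. (v $ i)^2) = (\<Sum>C\<in>G. \<Sum>i\<in>C. (v $ i)^2)"
        using finC part_disj by (simp add: sum.Union_disjoint)
      thus ?thesis unfolding V_def part_cover by (simp add: sum_distrib_left)
    qed
    finally have QM: "(\<Sum>C\<in>G. (\<Sum>i\<in>{0..<n}. (if i \<in> C then 1 else 0) * u i)^2) \<le> Mx * V" .
    have "k * V \<le> c * (Mx * V) - (\<Sum>i\<in>{0..<n}. u i)^2"
      using kV mult_left_mono[OF QM, of c] c_pos by linarith
    hence "k * V \<le> (c * Mx) * V" by (smt (verit) zero_le_power2 mult.assoc)
    thus ?thesis using Vpos by simp
  qed
  have "lambda_max K \<le> c * Mx"
    unfolding lambda_max_def using fin_eig zero bound by (subst Max_le_iff) auto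
  thus ?thesis unfolding Kdef c_def Mx_def .
qed



theorem theorem4p18:
  fixes n \<tau> :: nat and G :: "nat set set" and w :: "nat \<Rightarrow> real"
  assumes n_pos: "0 < n"
    and part_cover: "\<Union>G = {0..<n}"
    and part_nonempty: "\<forall>C\<in>G. C \<noteq> {}"
    and part_disj: "\<forall>C\<in>G. \<forall>D\<in>G. C \<noteq> D \<longrightarrow> C \<inter> D = {}"
    and part_size: "\<forall>C\<in>G. card C = \<tau>"
    and w_pos: "\<forall>i<n. 0 < w i"
  shows "sketch_residual n (mat n n (\<lambda>(i,j). if i = j then w i else 0)) G
            (\<lambda>C. real \<tau> / real n) (\<lambda>C. real n / real \<tau>)
         \<le> real n / real \<tau> * Max ((\<lambda>C. \<Sum>i\<in>C. w i) ` G)"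
proof -
  have W: "mat n n (\<lambda>(i,j). if i = j then w i else 0) = dg n w" by (simp add: dg_def)
  have Csub: "\<And>C. C \<in> G \<Longrightarrow> C \<subseteq> {0..<n}" using part_cover by blast
  have tau_pos: "0 < \<tau>"
  proof -
    have "0 \<in> \<Union>G" using part_cover n_pos by auto
    then obtain C where C: "C \<in> G" "0 \<in> C" by auto
    have "finite C" using Csub[OF C(1)] finite_subset by blast
    hence "0 < card C" using C(2) card_gt_0_iff by blast
    thus ?thesis using part_size C(1) by simp
  qed
  define chi where "chi = (\<lambda>C. vec n (\<lambda>i. if i \<in> C then 1 else (0::real)))"
  have pv: "proj_S (dg n w) (idcols n C) *\<^sub>v ones_vec n = chi C" if C: "C \<in> G" for C
  proof -
    have "proj_S (dg n w) (idcols n C) = dg n (\<lambda>i. if i \<in> C then 1 else 0)"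
      using proj_idcols[OF Csub[OF C]] w_pos by blast
    moreover have "dg n (\<lambda>i. if i \<in> C then 1 else 0) *\<^sub>v ones_vec n = chi C"
    proof (rule eq_vecI)
      fix i assume "i < dim_vec (chi C)"
      hence i: "i < n" by (simp add: chi_def)
      have "(dg n (\<lambda>i. if i \<in> C then 1 else 0) *\<^sub>v ones_vec n) $ i
          = (\<Sum>j\<in>{0..<n}. dg n (\<lambda>i. if i \<in> C then 1 else 0) $$ (i,j) * (\<lambda>_. 1) j)"
        using i by (auto simp: scalar_prod_def ones_vec_def intro!: sum.cong)
      also have "\<dots> = (if i \<in> C then 1 else 0)" by (subst sum_dg_left[OF i]) simp
      finally show "(dg n (\<lambda>i. if i \<in> C then 1 else 0) *\<^sub>v ones_vec n) $ i = chi C $ i"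
        using i by (simp add: chi_def)
    qed (simp add: chi_def)
    ultimately show ?thesis by simp
  qed
  define E where "E = mat n n (\<lambda>(i,j). \<Sum>C\<in>G. real \<tau> / real n * (real n / real \<tau>)\<^sup>2 *
                 (outer (proj_S (dg n w) (idcols n C) *\<^sub>v ones_vec n) (proj_S (dg n w) (idcols n C) *\<^sub>v ones_vec n)) $$ (i,j))"
  have Eij: "E $$ (i,j) = real n / real \<tau> * (\<Sum>C\<in>G. (if i \<in> C then 1 else 0) * (if j \<in> C then 1 else 0))"
    if ij: "i < n" "j < n" for i j
  proof -
    have "E $$ (i,j) = (\<Sum>C\<in>G. real n / real \<tau> * ((if i \<in> C then 1 else 0) * (if j \<in> C then 1 else 0)))"
      unfolding E_def using ij n_pos tau_pos
      by (auto simp: pv outer_def chi_def power2_eq_square intro!: sum.cong)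
    thus ?thesis by (simp add: sum_distrib_left)
  qed
  define J where "J = outer (ones_vec n) (ones_vec n)"
  have EJ: "E - J \<in> carrier_mat n n" by (rule minus_carrier_mat) (simp add: J_def outer_def ones_vec_def)
  have "dg n (\<lambda>i. sqrt (w i)) * (E - J) * dg n (\<lambda>i. sqrt (w i))
      = mat n n (\<lambda>(i,j). sqrt (w i) * (real n / real \<tau> *
            (\<Sum>C\<in>G. (if i \<in> C then 1 else 0) * (if j \<in> C then 1 else 0)) - 1) * sqrt (w j))"
    unfolding dg_mult_left[OF EJ]
    by (subst dg_mult_right[of _ n n]) (auto simp: Eij J_def outer_def ones_vec_def EJ intro!: eq_matI)
  hence "sketch_residual n (mat n n (\<lambda>(i,j). if i = j then w i else 0)) G
            (\<lambda>C. real \<tau> / real n) (\<lambda>C. real n / real \<tau>)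
       = lambda_max (mat n n (\<lambda>(i,j). sqrt (w i) * (real n / real \<tau> *
            (\<Sum>C\<in>G. (if i \<in> C then 1 else 0) * (if j \<in> C then 1 else 0)) - 1) * sqrt (w j)))"
    unfolding sketch_residual_def Let_def W sqrt_dg[OF w_pos] E_def[symmetric] J_def[symmetric] by simp
  also have "\<dots> \<le> real n / real \<tau> * Max ((\<lambda>C. \<Sum>i\<in>C. w i) ` G)"
    by (rule K_bound[OF n_pos part_cover part_disj part_size w_pos tau_pos])
  finally show ?thesis .
qed


end
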